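(* Assume (NC), and that $W,Z,U$ are discrete with finitely many values $w_1,\dots,w_{|\mathcal W|}$, $z_1,\dots,z_{|\mathcal Z|}$, $u_1,\dots,u_{|\mathcal U|}$. Suppose that for every $a\in\mathcal A$, $x\in\mathcal X$, the matrices $P(\mathbf W\mid\mathbf U,a,x)\in\mathbb R^{|\mathcal W|\times|\mathcal U|}$, $P(\mathbf U\mid\mathbf W,a,x)\in\mathbb R^{|\mathcal U|\times|\mathcal W|}$, $P(\mathbf Z\mid\mathbf U,a,x)\in\mathbb R^{|\mathcal Z|\times|\mathcal U|}$, $P(\mathbf U\mid\mathbf Z,a,x)\in\mathbb R^{|\mathcal U|\times|\mathcal Z|}$ all have rank $|\mathcal U|$. (1) If for every $g\in L_2(W,A,X)$, $\mathbb E[g(W,A,X)\mid Z,A,X]=0$ implies $g=0$, then $|\mathcal Z|\ge|\mathcal W|=|\mathcal U|$. (2) If for every $g\in L_2(Z,A,X)$, $\mathbb E[g(Z,A,X)\mid W,A,X]=0$ implies $g=0$, then $|\mathcal W|\ge|\mathcal Z|=|\mathcal U|$.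
   Context: Setup: random variables $(U,X,A,Z,W,Y)$ with $X$ observed covariates, $A\in\mathcal A$ an action ($\mathcal A$ carries a base measure $\mu$), $Z$ a negative control action, $W$ a negative control outcome, $Y$ real outcome, $U$ an unobserved confounder; potential outcomes $Y(a),Y(a,z),W(a,z)$; $\pi(a\mid x)$ a given real contrast function, $f(a\mid u,x)$ the conditional density of $A$ given $(U,X)$. Assumption (NC): (i) $Y=Y(A,Z)$, $W=W(A,Z)$; (ii) $Y(a,z)=Y(a)$; (iii) $W(a,z)=W$; (iv) $(Z,A)\perp(Y(a),W)\mid(U,X)$ for all $a$; (v) $|\pi(a\mid x)/f(a\mid x,u)|<\infty$. Matrix notation: $P(\mathbf W\mid\mathbf U,a,x)$ has $(i,s)$ entry $\Pr(W=w_i\mid U=u_s,A=a,X=x)$; $P(\mathbf U\mid\mathbf W,a,x)$ has $(s,i)$ entry $\Pr(U=u_s\mid W=w_i,A=a,X=x)$; $P(\mathbf Z\mid\mathbf U,a,x)$ and $P(\mathbf U\mid\mathbf Z,a,x)$ are defined analogously. *)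

theory Defs
  imports "HOL-Analysis.Analysis"
begin

text \<open>The (finite) value sets of U, Z, W are the
finite types 'u, 'z, 'w.  The joint density of (U,A,Z,W) given X = x, with respect to
counting measure on U, Z, W and the base measure mu on the action space, is
  pU x u * fAZ u x a z * hW u x w,
i.e. U | X has pmf pU, (A,Z) | (U,X) has density fAZ, and W | (U,X) has pmf hW,
the factorisation being the conditional independence (Z,A) indep W given (U,X)
of (NC)(iv) together with W = W(A,Z) = W of (NC)(i),(iii).\<close>

definition jdens ::
  "('x \<Rightarrow> 'u \<Rightarrow> real) \<Rightarrow> ('u \<Rightarrow> 'x \<Rightarrow> 'a \<Rightarrow> 'z \<Rightarrow> real) \<Rightarrow> ('u \<Rightarrow> 'x \<Rightarrow> 'w \<Rightarrow> real)
   \<Rightarrow> 'a \<Rightarrow> 'x \<Rightarrow> 'u \<Rightarrow> 'z \<Rightarrow> 'w \<Rightarrow> real" where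
  "jdens pU fAZ hW a x u z w = pU x u * fAZ u x a z * hW u x w"

text \<open>Unnormalised marginals (given A = a, X = x); all conditional probabilities
below are ratios, so the normalising constant p(a|x) cancels.\<close>

definition mUW :: "('a \<Rightarrow> 'x \<Rightarrow> 'u \<Rightarrow> 'z::finite \<Rightarrow> 'w \<Rightarrow> real) \<Rightarrow> 'a \<Rightarrow> 'x \<Rightarrow> 'u \<Rightarrow> 'w \<Rightarrow> real" where
  "mUW q a x u w = (\<Sum>z\<in>UNIV. q a x u z w)"
definition mUZ :: "('a \<Rightarrow> 'x \<Rightarrow> 'u \<Rightarrow> 'z \<Rightarrow> 'w::finite \<Rightarrow> real) \<Rightarrow> 'a \<Rightarrow> 'x \<Rightarrow> 'u \<Rightarrow> 'z \<Rightarrow> real" where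
  "mUZ q a x u z = (\<Sum>w\<in>UNIV. q a x u z w)"
definition mZW :: "('a \<Rightarrow> 'x \<Rightarrow> 'u::finite \<Rightarrow> 'z \<Rightarrow> 'w \<Rightarrow> real) \<Rightarrow> 'a \<Rightarrow> 'x \<Rightarrow> 'z \<Rightarrow> 'w \<Rightarrow> real" where
  "mZW q a x z w = (\<Sum>u\<in>UNIV. q a x u z w)"
definition mU :: "('a \<Rightarrow> 'x \<Rightarrow> 'u \<Rightarrow> 'z::finite \<Rightarrow> 'w::finite \<Rightarrow> real) \<Rightarrow> 'a \<Rightarrow> 'x \<Rightarrow> 'u \<Rightarrow> real" where
  "mU q a x u = (\<Sum>z\<in>UNIV. \<Sum>w\<in>UNIV. q a x u z w)"
definition mW :: "('a \<Rightarrow> 'x \<Rightarrow> 'u::finite \<Rightarrow> 'z::finite \<Rightarrow> 'w \<Rightarrow> real) \<Rightarrow> 'a \<Rightarrow> 'x \<Rightarrow> 'w \<Rightarrow> real" where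
  "mW q a x w = (\<Sum>u\<in>UNIV. \<Sum>z\<in>UNIV. q a x u z w)"
definition mZ :: "('a \<Rightarrow> 'x \<Rightarrow> 'u::finite \<Rightarrow> 'z \<Rightarrow> 'w::finite \<Rightarrow> real) \<Rightarrow> 'a \<Rightarrow> 'x \<Rightarrow> 'z \<Rightarrow> real" where
  "mZ q a x z = (\<Sum>u\<in>UNIV. \<Sum>w\<in>UNIV. q a x u z w)"

definition P_W_U :: "('a \<Rightarrow> 'x \<Rightarrow> 'u::finite \<Rightarrow> 'z::finite \<Rightarrow> 'w::finite \<Rightarrow> real) \<Rightarrow> 'a \<Rightarrow> 'x \<Rightarrow> real^'u^'w" where
  "P_W_U q a x = (\<chi> w u. mUW q a x u w / mU q a x u)"
definition P_U_W :: "('a \<Rightarrow> 'x \<Rightarrow> 'u::finite \<Rightarrow> 'z::finite \<Rightarrow> 'w::finite \<Rightarrow> real) \<Rightarrow> 'a \<Rightarrow> 'x \<Rightarrow> real^'w^'u" where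
  "P_U_W q a x = (\<chi> u w. mUW q a x u w / mW q a x w)"
definition P_Z_U :: "('a \<Rightarrow> 'x \<Rightarrow> 'u::finite \<Rightarrow> 'z::finite \<Rightarrow> 'w::finite \<Rightarrow> real) \<Rightarrow> 'a \<Rightarrow> 'x \<Rightarrow> real^'u^'z" where
  "P_Z_U q a x = (\<chi> z u. mUZ q a x u z / mU q a x u)"
definition P_U_Z :: "('a \<Rightarrow> 'x \<Rightarrow> 'u::finite \<Rightarrow> 'z::finite \<Rightarrow> 'w::finite \<Rightarrow> real) \<Rightarrow> 'a \<Rightarrow> 'x \<Rightarrow> real^'z^'u" where
  "P_U_Z q a x = (\<chi> u z. mUZ q a x u z / mZ q a x z)"

text \<open>Completeness: E[g(W,A,X) | Z,A,X] = 0 a.s. implies g = 0 a.s., written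
pointwise in (a,x) (discrete W, Z).\<close>

definition complete_W_given_Z :: "('a \<Rightarrow> 'x \<Rightarrow> 'u::finite \<Rightarrow> 'z::finite \<Rightarrow> 'w::finite \<Rightarrow> real) \<Rightarrow> bool" where
  "complete_W_given_Z q \<longleftrightarrow> (\<forall>a x. \<forall>g :: 'w \<Rightarrow> real.
     (\<forall>z. mZ q a x z > 0 \<longrightarrow> (\<Sum>w\<in>UNIV. g w * (mZW q a x z w / mZ q a x z)) = 0)
     \<longrightarrow> (\<forall>w. mW q a x w > 0 \<longrightarrow> g w = 0))"

definition complete_Z_given_W :: "('a \<Rightarrow> 'x \<Rightarrow> 'u::finite \<Rightarrow> 'z::finite \<Rightarrow> 'w::finite \<Rightarrow> real) \<Rightarrow> bool" where
  "complete_Z_given_W q \<longleftrightarrow> (\<forall>a x. \<forall>g :: 'z \<Rightarrow> real.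
     (\<forall>w. mW q a x w > 0 \<longrightarrow> (\<Sum>z\<in>UNIV. g z * (mZW q a x z w / mW q a x w)) = 0)
     \<longrightarrow> (\<forall>z. mZ q a x z > 0 \<longrightarrow> g z = 0))"

end

theory Submission
  imports Defs
begin

lemma inj_of_kernel:
  fixes M :: "real^'n^'m"
  assumes "\<And>g. M *v g = 0 \<Longrightarrow> g = 0"
  shows "CARD('n) \<le> CARD('m)"
proof -
  have "inj ((*v) M)"
  proof (rule injI)
    fix g1 g2 assume "M *v g1 = M *v g2"
    hence "M *v (g1 - g2) = 0" by (simp add: matrix_vector_mult_diff_distrib)
    thus "g1 = g2" using assms[of "g1 - g2"] by simp
  qed
  hence "rank M = CARD('n)" by (simp add: full_rank_injective)
  thus ?thesis using rank_bound[of M] by simp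
qed

theorem mainTheorem17:
  fixes pU :: "'x \<Rightarrow> 'u::finite \<Rightarrow> real"
    and fAZ :: "'u \<Rightarrow> 'x \<Rightarrow> 'a \<Rightarrow> 'z::finite \<Rightarrow> real"
    and hW :: "'u \<Rightarrow> 'x \<Rightarrow> 'w::finite \<Rightarrow> real"
    and \<pi> :: "'a \<Rightarrow> 'x \<Rightarrow> real"
  assumes pU_nonneg: "\<And>x u. pU x u \<ge> 0" and pU_sum: "\<And>x. (\<Sum>u\<in>UNIV. pU x u) = 1"
    and fAZ_nonneg: "\<And>u x a z. fAZ u x a z \<ge> 0"
    and hW_nonneg: "\<And>u x w. hW u x w \<ge> 0" and hW_sum: "\<And>u x. (\<Sum>w\<in>UNIV. hW u x w) = 1"
    and positivity: "\<And>a x u. \<pi> a x \<noteq> 0 \<Longrightarrow> (\<Sum>z\<in>UNIV. fAZ u x a z) > 0"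
    and W_support: "\<And>a x w. mW (jdens pU fAZ hW) a x w > 0"
    and Z_support: "\<And>a x z. mZ (jdens pU fAZ hW) a x z > 0"
    and rank_WU: "\<And>a x. rank (P_W_U (jdens pU fAZ hW) a x) = CARD('u)"
    and rank_UW: "\<And>a x. rank (P_U_W (jdens pU fAZ hW) a x) = CARD('u)"
    and rank_ZU: "\<And>a x. rank (P_Z_U (jdens pU fAZ hW) a x) = CARD('u)"
    and rank_UZ: "\<And>a x. rank (P_U_Z (jdens pU fAZ hW) a x) = CARD('u)"
  shows "(complete_W_given_Z (jdens pU fAZ hW) \<longrightarrow> CARD('z) \<ge> CARD('w) \<and> CARD('w) = CARD('u))
       \<and> (complete_Z_given_W (jdens pU fAZ hW) \<longrightarrow> CARD('w) \<ge> CARD('z) \<and> CARD('z) = CARD('u))"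
  proof -
  let ?q = "jdens pU fAZ hW"
  fix a :: 'a and x :: 'x
  have mZW: "mZW ?q a x z w = (\<Sum>u\<in>UNIV. pU x u * fAZ u x a z * hW u x w)" for z w
    by (simp add: mZW_def jdens_def)
  have r1: "CARD('u) \<le> CARD('w)" using rank_bound[of "P_W_U ?q a x"] rank_WU[of a x] by simp
  have r2: "CARD('u) \<le> CARD('z)" using rank_bound[of "P_Z_U ?q a x"] rank_ZU[of a x] by simp
  have p1: "CARD('w) \<le> CARD('u) \<and> CARD('w) \<le> CARD('z)" if c: "complete_W_given_Z ?q"
  proof -
    have kz: "g = 0" if h: "(\<And>z. (\<Sum>w\<in>UNIV. g $ w * mZW ?q a x z w) = 0)" for g :: "real^'w"
    proof -
      have "\<forall>w. mW ?q a x w > 0 \<longrightarrow> g $ w = 0"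
        using c[unfolded complete_W_given_Z_def, rule_format, of a x "\<lambda>w. g $ w"]
        by (simp add: h sum_divide_distrib[symmetric] times_divide_eq_right)
      thus ?thesis using W_support by (simp add: vec_eq_iff)
    qed
    have A: "CARD('w) \<le> CARD('u)"
    proof (rule inj_of_kernel[of "\<chi> u w. hW u x w"])
      fix g :: "real^'w" assume h0: "(\<chi> u w. hW u x w) *v g = 0"
      hence hu: "(\<Sum>w\<in>UNIV. hW u x w * g $ w) = 0" for u
        by (simp add: matrix_vector_mult_def vec_eq_iff)
      show "g = 0"
      proof (rule kz)
        fix z
        have "(\<Sum>w\<in>UNIV. g $ w * mZW ?q a x z w)
            = (\<Sum>w\<in>UNIV. \<Sum>u\<in>UNIV. pU x u * fAZ u x a z * (hW u x w * g $ w))"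
          by (simp add: mZW sum_distrib_left mult_ac)
        also have "\<dots> = (\<Sum>u\<in>UNIV. \<Sum>w\<in>UNIV. pU x u * fAZ u x a z * (hW u x w * g $ w))"
          by (rule sum.swap)
        also have "\<dots> = (\<Sum>u\<in>UNIV. pU x u * fAZ u x a z * (\<Sum>w\<in>UNIV. hW u x w * g $ w))"
          by (simp add: sum_distrib_left)
        also have "\<dots> = 0" by (simp add: hu)
        finally show "(\<Sum>w\<in>UNIV. g $ w * mZW ?q a x z w) = 0" .
      qed
    qed
    have B: "CARD('w) \<le> CARD('z)"
    proof (rule inj_of_kernel[of "\<chi> z w. mZW ?q a x z w"])
      fix g :: "real^'w" assume "(\<chi> z w. mZW ?q a x z w) *v g = 0"
      hence "(\<Sum>w\<in>UNIV. g $ w * mZW ?q a x z w) = 0" for z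
        by (simp add: matrix_vector_mult_def vec_eq_iff mult_ac)
      thus "g = 0" by (rule kz)
    qed
    show ?thesis using A B by simp
  qed
  have p2: "CARD('z) \<le> CARD('u) \<and> CARD('z) \<le> CARD('w)" if c: "complete_Z_given_W ?q"
  proof -
    have kz: "g = 0" if h: "(\<And>w. (\<Sum>z\<in>UNIV. g $ z * mZW ?q a x z w) = 0)" for g :: "real^'z"
    proof -
      have "\<forall>z. mZ ?q a x z > 0 \<longrightarrow> g $ z = 0"
        using c[unfolded complete_Z_given_W_def, rule_format, of a x "\<lambda>z. g $ z"]
        by (simp add: h sum_divide_distrib[symmetric] times_divide_eq_right)
      thus ?thesis using Z_support by (simp add: vec_eq_iff)
    qed
    have A: "CARD('z) \<le> CARD('u)"
    proof (rule inj_of_kernel[of "\<chi> u z. pU x u * fAZ u x a z"])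
      fix g :: "real^'z" assume h0: "(\<chi> u z. pU x u * fAZ u x a z) *v g = 0"
      hence hu: "(\<Sum>z\<in>UNIV. pU x u * fAZ u x a z * g $ z) = 0" for u
        by (simp add: matrix_vector_mult_def vec_eq_iff)
      show "g = 0"
      proof (rule kz)
        fix w
        have "(\<Sum>z\<in>UNIV. g $ z * mZW ?q a x z w)
            = (\<Sum>z\<in>UNIV. \<Sum>u\<in>UNIV. hW u x w * (pU x u * fAZ u x a z * g $ z))"
          by (simp add: mZW sum_distrib_left mult_ac)
        also have "\<dots> = (\<Sum>u\<in>UNIV. \<Sum>z\<in>UNIV. hW u x w * (pU x u * fAZ u x a z * g $ z))"
          by (rule sum.swap)
        also have "\<dots> = (\<Sum>u\<in>UNIV. hW u x w * (\<Sum>z\<in>UNIV. pU x u * fAZ u x a z * g $ z))"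
          by (simp add: sum_distrib_left)
        also have "\<dots> = 0" by (simp add: hu)
        finally show "(\<Sum>z\<in>UNIV. g $ z * mZW ?q a x z w) = 0" .
      qed
    qed
    have B: "CARD('z) \<le> CARD('w)"
    proof (rule inj_of_kernel[of "\<chi> w z. mZW ?q a x z w"])
      fix g :: "real^'z" assume "(\<chi> w z. mZW ?q a x z w) *v g = 0"
      hence "(\<Sum>z\<in>UNIV. g $ z * mZW ?q a x z w) = 0" for w
        by (simp add: matrix_vector_mult_def vec_eq_iff mult_ac)
      thus "g = 0" by (rule kz)
    qed
    show ?thesis using A B by simp
  qed
  show ?thesis using p1 p2 r1 r2 by auto
qed

end
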